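(* Let $\mathcal{F}$ be a class of real functions on $\mathcal{X}$ and $(\mathbf{X}_i,Y_i)_{i=1}^n$ a sample. Let $\widehat g_1,\dots,\widehat g_d$ be $\Delta_1$-empirical risk minimizers in $\mathcal{F}$, and let $\widetilde f$ be an exact empirical risk minimizer over $Star_d(\mathcal{F},\widehat g_1,\dots,\widehat g_d)$. Then for every $h\in\mathcal{F}$, $$\widehat{\mathbb{E}}(h-Y)^2-\widehat{\mathbb{E}}(\widetilde f-Y)^2\ge \frac1{18}\,\widehat{\mathbb{E}}(\widetilde f-h)^2-2\Delta_1.$$
   Context: $\widehat{\mathbb{E}}(f)=\frac1n\sum_{i=1}^n f(\mathbf{X}_i)$ (and $\widehat{\mathbb{E}}(f-Y)^2=\frac1n\sum_i(f(\mathbf{X}_i)-Y_i)^2$). $\widehat g\in\mathcal{G}$ is a $\Delta$-empirical risk minimizer in $\mathcal{G}$ if $\widehat{\mathbb{E}}(\widehat g-Y)^2\le\min_{f\in\mathcal{G}}\widehat{\mathbb{E}}(f-Y)^2+\Delta$. $Star_d(\mathcal{F},\widehat g_1,\dots,\widehat g_d)=\{\sum_{i=1}^d\lambda_i\widehat g_i+(1-\sum_i\lambda_i)f:\lambda_i\in[0,1],\ 1-\sum_i\lambda_i\in[0,1],\ f\in\mathcal{F}\}$. *)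

theory Defs
  imports Main "HOL-Analysis.Analysis"
begin

definition emp_mean :: "nat \<Rightarrow> (nat \<Rightarrow> real) \<Rightarrow> real" where
  "emp_mean n u = (1 / real n) * (\<Sum>i = 1..n. u i)"

definition emp_risk :: "nat \<Rightarrow> (nat \<Rightarrow> 'x) \<Rightarrow> (nat \<Rightarrow> real) \<Rightarrow> ('x \<Rightarrow> real) \<Rightarrow> real" where
  "emp_risk n X Y f = emp_mean n (\<lambda>i. (f (X i) - Y i)^2)"

definition emp_dist2 :: "nat \<Rightarrow> (nat \<Rightarrow> 'x) \<Rightarrow> ('x \<Rightarrow> real) \<Rightarrow> ('x \<Rightarrow> real) \<Rightarrow> real" where
  "emp_dist2 n X f g = emp_mean n (\<lambda>i. (f (X i) - g (X i))^2)"

definition is_ERM :: "nat \<Rightarrow> (nat \<Rightarrow> 'x) \<Rightarrow> (nat \<Rightarrow> real) \<Rightarrow> real \<Rightarrow> ('x \<Rightarrow> real) set \<Rightarrow> ('x \<Rightarrow> real) \<Rightarrow> bool" where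
  "is_ERM n X Y \<Delta> G g \<longleftrightarrow> g \<in> G \<and> emp_risk n X Y g \<le> (INF f\<in>G. emp_risk n X Y f) + \<Delta>"

definition star_d :: "nat \<Rightarrow> ('x \<Rightarrow> real) set \<Rightarrow> (nat \<Rightarrow> ('x \<Rightarrow> real)) \<Rightarrow> ('x \<Rightarrow> real) set" where
  "star_d d F g = {(\<lambda>x. (\<Sum>i = 1..d. lam i * g i x) + (1 - (\<Sum>i = 1..d. lam i)) * f x) | lam f.
      (\<forall>i\<in>{1..d}. 0 \<le> lam i \<and> lam i \<le> 1) \<and>
      0 \<le> 1 - (\<Sum>i = 1..d. lam i) \<and> 1 - (\<Sum>i = 1..d. lam i) \<le> 1 \<and> f \<in> F}"

end

theory Submission
  imports Defs
begin

lemma em_lin3: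
  "emp_mean n (\<lambda>i. a * u i + b * v i + c * w i) =
   a * emp_mean n u + b * emp_mean n v + c * emp_mean n w"
  by (simp add: emp_mean_def sum.distrib sum_distrib_left algebra_simps)

lemma em_mono:
  assumes "\<And>i. u i \<le> v i"
  shows "emp_mean n u \<le> emp_mean n v"
  unfolding emp_mean_def using assms
  by (intro mult_left_mono sum_mono) auto

lemma mid_risk:
  "emp_risk n X Y (\<lambda>x. (u x + v x) / 2) =
   (1/2) * emp_risk n X Y u + (1/2) * emp_risk n X Y v + (-1/4) * emp_dist2 n X u v"
proof -
  have eq: "(\<lambda>i. ((u (X i) + v (X i)) / 2 - Y i)^2) =
        (\<lambda>i. (1/2) * (u (X i) - Y i)^2 + (1/2) * (v (X i) - Y i)^2 + (-1/4) * (u (X i) - v (X i))^2)"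
    by (rule ext) (simp add: power2_eq_square field_simps)
  show ?thesis unfolding emp_risk_def emp_dist2_def eq by (rule em_lin3)
qed

lemma tri2:
  "emp_dist2 n X u w \<le> 2 * emp_dist2 n X u v + 2 * emp_dist2 n X v w + 0 * emp_dist2 n X v w"
proof -
  have "emp_dist2 n X u w \<le> emp_mean n (\<lambda>i. 2 * (u (X i) - v (X i))^2 + 2 * (v (X i) - w (X i))^2 + 0 * (v (X i) - w (X i))^2)"
    unfolding emp_dist2_def
  proof (rule em_mono)
    fix i
    have "0 \<le> (u (X i) - 2 * v (X i) + w (X i))^2" by simp
    then show "(u (X i) - w (X i))^2 \<le> 2 * (u (X i) - v (X i))^2 + 2 * (v (X i) - w (X i))^2 + 0 * (v (X i) - w (X i))^2"
      by (simp add: power2_eq_square algebra_simps)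
  qed
  then show ?thesis unfolding emp_dist2_def em_lin3 .
qed

lemma risk_nonneg: "0 \<le> emp_risk n X Y f"
  unfolding emp_risk_def emp_mean_def by (intro mult_nonneg_nonneg sum_nonneg) auto

lemma erm_le:
  assumes "is_ERM n X Y D G g" "f \<in> G"
  shows "emp_risk n X Y g \<le> emp_risk n X Y f + D"
proof -
  have "(INF f\<in>G. emp_risk n X Y f) \<le> emp_risk n X Y f"
    by (rule cINF_lower) (auto intro!: bdd_belowI[where m=0] simp: risk_nonneg assms)
  then show ?thesis using assms(1) unfolding is_ERM_def by linarith
qed

theorem lemma1:
  fixes F :: "('x \<Rightarrow> real) set"
    and X :: "nat \<Rightarrow> 'x" and Y :: "nat \<Rightarrow> real"
    and n d :: nat and \<Delta>\<^sub>1 :: real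
    and g :: "nat \<Rightarrow> ('x \<Rightarrow> real)" and ft h :: "'x \<Rightarrow> real"
  assumes "n \<ge> 1" and "d \<ge> 1"
    and "\<forall>i\<in>{1..d}. is_ERM n X Y \<Delta>\<^sub>1 F (g i)"
    and "is_ERM n X Y 0 (star_d d F g) ft"
    and "h \<in> F"
  shows "emp_risk n X Y h - emp_risk n X Y ft
           \<ge> (1/18) * emp_dist2 n X ft h - 2 * \<Delta>\<^sub>1"
proof -
  let ?R = "emp_risk n X Y"
  have one: "1 \<in> {1..d}" using assms(2) by simp
  have gE: "is_ERM n X Y \<Delta>\<^sub>1 F (g 1)" using assms(3) one by blast
  have g1F: "g 1 \<in> F" using gE unfolding is_ERM_def by blast
  have b_le: "?R (g 1) \<le> ?R h + \<Delta>\<^sub>1" using erm_le[OF gE assms(5)] .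
  have Dnn: "0 \<le> \<Delta>\<^sub>1" using erm_le[OF gE g1F] by simp
  have ftS: "ft \<in> star_d d F g" using assms(4) unfolding is_ERM_def by blast
  have opt: "\<And>p. p \<in> star_d d F g \<Longrightarrow> ?R ft \<le> ?R p"
    using erm_le[OF assms(4)] by simp
  obtain lam f where ftdef: "ft = (\<lambda>x. (\<Sum>i = 1..d. lam i * g i x) + (1 - (\<Sum>i = 1..d. lam i)) * f x)"
    and lam: "\<forall>i\<in>{1..d}. 0 \<le> lam i \<and> lam i \<le> 1"
    and s0: "0 \<le> 1 - (\<Sum>i = 1..d. lam i)" and s1: "1 - (\<Sum>i = 1..d. lam i) \<le> 1" and fF: "f \<in> F"
    using ftS unfolding star_d_def by blast
  have hS: "h \<in> star_d d F g"
    unfolding star_d_def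
    by (rule CollectI, rule exI[where x="\<lambda>i. 0"], rule exI[where x=h]) (simp add: assms(5))
  define e :: "nat \<Rightarrow> real" where "e = (\<lambda>i. if i = 1 then 1/2 else 0)"
  have se: "(\<Sum>i = 1..d. e i) = 1/2" using one unfolding e_def
    by (simp add: sum.delta)
  have sge: "(\<Sum>i = 1..d. e i * g i x) = g 1 x / 2" for x
  proof -
    have "(\<Sum>i = 1..d. e i * g i x) = (\<Sum>i = 1..d. if i = 1 then g 1 x / 2 else 0)"
      by (rule sum.cong) (auto simp: e_def)
    also have "\<dots> = g 1 x / 2" using one sum.delta[of "{1..d}" 1 "\<lambda>_. g 1 x / 2"] by simp
    finally show ?thesis .
  qed
  have m1S: "(\<lambda>x. (g 1 x + h x) / 2) \<in> star_d d F g"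
    unfolding star_d_def
    apply (rule CollectI, rule exI[where x=e], rule exI[where x=h])
    using se sge assms(5) by (auto simp: e_def field_simps)
  define l2 where "l2 = (\<lambda>i. lam i / 2 + e i)"
  have sl2: "(\<Sum>i = 1..d. l2 i) = (\<Sum>i = 1..d. lam i) / 2 + 1/2"
    unfolding l2_def using se by (simp add: sum.distrib sum_divide_distrib)
  have sgl2: "\<And>x. (\<Sum>i = 1..d. l2 i * g i x) = (\<Sum>i = 1..d. lam i * g i x) / 2 + g 1 x / 2"
    unfolding l2_def using sge by (simp add: distrib_right sum.distrib sum_divide_distrib)
  have m2S: "(\<lambda>x. (ft x + g 1 x) / 2) \<in> star_d d F g"
    unfolding star_d_def
    apply (rule CollectI, rule exI[where x=l2], rule exI[where x=f])
    using sl2 sgl2 fF lam s0 s1 by (auto simp: ftdef l2_def e_def field_simps)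
  have A1: "?R ft \<le> ?R h" using opt[OF hS] .
  have A2: "?R ft \<le> (1/2) * ?R (g 1) + (1/2) * ?R h + (-1/4) * emp_dist2 n X (g 1) h"
    using opt[OF m1S] by (simp add: mid_risk)
  have A3: "?R ft \<le> (1/2) * ?R ft + (1/2) * ?R (g 1) + (-1/4) * emp_dist2 n X ft (g 1)"
    using opt[OF m2S] by (simp add: mid_risk)
  have A4: "emp_dist2 n X ft h \<le> 2 * emp_dist2 n X ft (g 1) + 2 * emp_dist2 n X (g 1) h + 0 * emp_dist2 n X (g 1) h"
    by (rule tri2)
  show ?thesis using A1 A2 A3 A4 b_le Dnn by linarith
qed

end
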